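(* For every real constant $c>0$, the function $$L_c(\alpha,\mathbf p)\;=\;-c\,\log \sum_{\mathbf x\models\alpha}\ \prod_{i:\,\mathbf x\models X_i}\mathbf p_i\prod_{i:\,\mathbf x\models\neg X_i}(1-\mathbf p_i)$$ (where the sum ranges over all states $\mathbf x\in\{0,1\}^V$ satisfying $\alpha$, $V$ being the index set of $\mathbf p$) satisfies all of the axioms (A1)–(A8) listed in the context. Conversely, every function $L$ satisfying all of the axioms (A1)–(A8) is equal to $L_c$ for some constant $c>0$. In other words, the semantic loss is the unique function satisfying (A1)–(A8), up to a positive multiplicative constant.
   Context: Setting: For a finite set $V$ of Boolean variables, a sentence over $V$ is a propositional formula built from variables in $V$ with the usual connectives; $\mathit{true}$ denotes the constant true sentence. A state $\mathbf x$ is an assignment in $\{0,1\}^V$; it is identified both with the sentence that is the conjunction of the literals it makes true, and with the vector $\mathbf x\in\{0,1\}^V\subseteq[0,1]^V$. We write $\mathbf x\models\alpha$ if $\mathbf x$ satisfies $\alpha$, $\alpha\models\beta$ if every state satisfying $\alpha$ satisfies $\beta$, and $\alpha\equiv\beta$ if both $\alpha\models\beta$ and $\beta\models\alpha$. A loss function $L$ assigns to every finite variable set $V$, every vector $\mathbf p\in[0,1]^V$ (where $\mathbf p_i$ is the probability of variable $X_i$) and every sentence $\alpha$ whose variables lie in $V$ a value $L(\alpha,\mathbf p)\in\mathbb R\cup\{+\infty\}$. Logarithms are natural, with $-\log 0=+\infty$ and $K^{-\infty}=0$. If $\mathbf p\in[0,1]^X$ and $\mathbf q\in[0,1]^Y$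 with $X,Y$ disjoint, $[\mathbf p\,\mathbf q]\in[0,1]^{X\cup Y}$ is their concatenation. Axioms: (A1) Truth: $L(\mathit{true},\mathbf p)=0$ for all $\mathbf p$. (A2) Additive independence: if $\alpha$ is a sentence over $X$, $\beta$ a sentence over $Y$ with $X\cap Y=\emptyset$, $\mathbf p\in[0,1]^X$, $\mathbf q\in[0,1]^Y$, then $L(\alpha\wedge\beta,[\mathbf p\,\mathbf q])=L(\alpha,\mathbf p)+L(\beta,\mathbf q)$. (A3) Monotonicity: if $\alpha\models\beta$ then $L(\alpha,\mathbf p)\ge L(\beta,\mathbf p)$ for all $\mathbf p$. (A4) Identity: for every state $\mathbf x$, $L(\mathbf x,\mathbf x)=0$ (sentence vs. deterministic vector). (A5) Label-literal correspondence: for each variable $X$ there are real constants $K,K'$ such that for every $p\in[0,1]$ (a vector over $\{X\}$), $L(X,p)=-K\log p$ and $L(\neg X,p)=-K'\log(1-p)$. (A6) Value symmetry: $L(\alpha,\mathbf p)=L(\bar\alpha,\mathbf 1-\mathbf p)$, where $\bar\alpha$ replaces every variable in $\alpha$ by its negation and $\mathbf 1-\mathbf p$ is taken componentwise. (A7) Variable symmetry: for a permutation $\pi$ of the variable set $V$ of $\mathbf p$, $L(\alpha,\mathbf p)=L(\pi(\alpha),\pi(\mathbf p))$, where $\pi(\alpha)$ renames each variable $X$ to $\pi(X)$ and $\pi(\mathbf p)$ is the correspondingly permuted vector. (A8) Exponential additivity: there is a constant $K>0$ such that for all $\mathbf p$ and all sentences $\alpha,\beta$ with $\alpha\wedge\beta$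 unsatisfiable, $K^{-L(\alpha\vee\beta,\mathbf p)}=K^{-L(\alpha,\mathbf p)}+K^{-L(\beta,\mathbf p)}$. *)

theory Defs
  imports Complex_Main "HOL-Library.FuncSet" "HOL-Library.Extended_Real"
          "HOL-Combinatorics.Permutations"
begin

datatype 'v form = Var 'v | TT | FF | Neg "'v form" | Conj "'v form" "'v form"
  | Disj "'v form" "'v form" | Imp "'v form" "'v form"

fun eval :: "('v \<Rightarrow> bool) \<Rightarrow> 'v form \<Rightarrow> bool" where
  "eval s (Var v) = s v"
| "eval s TT = True"
| "eval s FF = False"
| "eval s (Neg a) = (\<not> eval s a)"
| "eval s (Conj a b) = (eval s a \<and> eval s b)"
| "eval s (Disj a b) = (eval s a \<or> eval s b)"
| "eval s (Imp a b) = (eval s a \<longrightarrow> eval s b)"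

definition entails :: "'v form \<Rightarrow> 'v form \<Rightarrow> bool" where
  "entails a b \<longleftrightarrow> (\<forall>s. eval s a \<longrightarrow> eval s b)"

definition satisfiable :: "'v form \<Rightarrow> bool" where
  "satisfiable a \<longleftrightarrow> (\<exists>s. eval s a)"

fun negvars :: "'v form \<Rightarrow> 'v form" where
  "negvars (Var v) = Neg (Var v)"
| "negvars TT = TT"
| "negvars FF = FF"
| "negvars (Neg a) = Neg (negvars a)"
| "negvars (Conj a b) = Conj (negvars a) (negvars b)"
| "negvars (Disj a b) = Disj (negvars a) (negvars b)"
| "negvars (Imp a b) = Imp (negvars a) (negvars b)"

text \<open>A state over V is represented by the set S \<subseteq> V of variables it makes true.
  As a sentence it is the conjunction of the literals it makes true.\<close>
definition lit :: "'v set \<Rightarrow> 'v \<Rightarrow> 'v form" where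
  "lit S v = (if v \<in> S then Var v else Neg (Var v))"

definition state_form :: "'v set \<Rightarrow> 'v set \<Rightarrow> 'v form" where
  "state_form V S = foldr Conj (map (lit S) (SOME xs. set xs = V \<and> distinct xs)) TT"

definition state_vec :: "'v set \<Rightarrow> 'v set \<Rightarrow> 'v \<Rightarrow> real" where
  "state_vec V S = restrict (\<lambda>i. if i \<in> S then 1 else 0) V"

definition pvecs :: "'v set \<Rightarrow> ('v \<Rightarrow> real) set" where
  "pvecs V = V \<rightarrow>\<^sub>E {0..1}"

definition concat_vec :: "'v set \<Rightarrow> ('v \<Rightarrow> real) \<Rightarrow> ('v \<Rightarrow> real) \<Rightarrow> 'v \<Rightarrow> real" where
  "concat_vec X p q = (\<lambda>i. if i \<in> X then p i else q i)"

definition one_minus :: "'v set \<Rightarrow> ('v \<Rightarrow> real) \<Rightarrow> 'v \<Rightarrow> real" where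
  "one_minus V p = restrict (\<lambda>i. 1 - p i) V"

definition single_vec :: "'v \<Rightarrow> real \<Rightarrow> 'v \<Rightarrow> real" where
  "single_vec v x = restrict (\<lambda>_. x) {v}"

definition valid :: "'v set \<Rightarrow> ('v \<Rightarrow> real) \<Rightarrow> 'v form \<Rightarrow> bool" where
  "valid V p a \<longleftrightarrow> finite V \<and> p \<in> pvecs V \<and> set_form a \<subseteq> V"

definition neglog :: "real \<Rightarrow> ereal" where
  "neglog x = (if x = 0 then \<infinity> else ereal (- ln x))"

definition expo :: "real \<Rightarrow> ereal \<Rightarrow> real" where
  "expo K l = (if l = \<infinity> then 0 else K powr (- real_of_ereal l))"

type_synonym 'v lossfun = "'v set \<Rightarrow> ('v \<Rightarrow> real) \<Rightarrow> 'v form \<Rightarrow> ereal"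

definition is_loss :: "'v lossfun \<Rightarrow> bool" where
  "is_loss L \<longleftrightarrow> (\<forall>V p a. valid V p a \<longrightarrow> L V p a \<noteq> -\<infinity>)"

definition A1 :: "'v lossfun \<Rightarrow> bool" where
  "A1 L \<longleftrightarrow> (\<forall>V p. finite V \<and> p \<in> pvecs V \<longrightarrow> L V p TT = 0)"

definition A2 :: "'v lossfun \<Rightarrow> bool" where
  "A2 L \<longleftrightarrow> (\<forall>X Y p q a b. valid X p a \<and> valid Y q b \<and> X \<inter> Y = {} \<longrightarrow>
      L (X \<union> Y) (concat_vec X p q) (Conj a b) = L X p a + L Y q b)"

definition A3 :: "'v lossfun \<Rightarrow> bool" where
  "A3 L \<longleftrightarrow> (\<forall>V p a b. valid V p a \<and> valid V p b \<and> entails a b \<longrightarrow> L V p a \<ge> L V p b)"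

definition A4 :: "'v lossfun \<Rightarrow> bool" where
  "A4 L \<longleftrightarrow> (\<forall>V S. finite V \<and> S \<subseteq> V \<longrightarrow> L V (state_vec V S) (state_form V S) = 0)"

definition A5 :: "'v lossfun \<Rightarrow> bool" where
  "A5 L \<longleftrightarrow> (\<forall>v. \<exists>K K' :: real. \<forall>x \<in> {0..1}.
      L {v} (single_vec v x) (Var v) = ereal K * neglog x \<and>
      L {v} (single_vec v x) (Neg (Var v)) = ereal K' * neglog (1 - x))"

definition A6 :: "'v lossfun \<Rightarrow> bool" where
  "A6 L \<longleftrightarrow> (\<forall>V p a. valid V p a \<longrightarrow> L V p a = L V (one_minus V p) (negvars a))"

definition A7 :: "'v lossfun \<Rightarrow> bool" where
  "A7 L \<longleftrightarrow> (\<forall>V p a \<pi>. valid V p a \<and> \<pi> permutes V \<longrightarrow>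
      L V p a = L V (p \<circ> inv \<pi>) (map_form \<pi> a))"

definition A8 :: "'v lossfun \<Rightarrow> bool" where
  "A8 L \<longleftrightarrow> (\<exists>K::real. K > 0 \<and> (\<forall>V p a b. valid V p a \<and> valid V p b \<and>
      \<not> satisfiable (Conj a b) \<longrightarrow>
      expo K (L V p (Disj a b)) = expo K (L V p a) + expo K (L V p b)))"

definition loss_axioms :: "'v lossfun \<Rightarrow> bool" where
  "loss_axioms L \<longleftrightarrow> is_loss L \<and> A1 L \<and> A2 L \<and> A3 L \<and> A4 L \<and> A5 L \<and> A6 L \<and> A7 L \<and> A8 L"

definition semantic_loss :: "real \<Rightarrow> 'v lossfun" where
  "semantic_loss c V p a = ereal c * neglog
     (\<Sum>S \<in> {S. S \<subseteq> V \<and> eval (\<lambda>i. i \<in> S) a}.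
        (\<Prod>i\<in>S. p i) * (\<Prod>i\<in>V - S. 1 - p i))"

end

theory Submission imports Defs begin

fun subst :: "'v \<Rightarrow> bool \<Rightarrow> 'v form \<Rightarrow> 'v form" where
  "subst v c (Var u) = (if u = v then (if c then TT else FF) else Var u)"
| "subst v c TT = TT"
| "subst v c FF = FF"
| "subst v c (Neg a) = Neg (subst v c a)"
| "subst v c (Conj a b) = Conj (subst v c a) (subst v c b)"
| "subst v c (Disj a b) = Disj (subst v c a) (subst v c b)"
| "subst v c (Imp a b) = Imp (subst v c a) (subst v c b)"

lemma eval_subst: "eval s (subst v c a) = eval (s(v:=c)) a"
  by (induction a) auto

lemma set_subst: "set_form (subst v c a) \<subseteq> set_form a - {v}"
  by (induction a) auto

lemma eval_cong: "(\<And>x. x \<in> set_form a \<Longrightarrow> s x = t x) \<Longrightarrow> eval s a = eval t a"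
  by (induction a) auto

lemma eval_negvars: "eval s (negvars a) = eval (\<lambda>i. \<not> s i) a"
  by (induction a) auto

lemma eval_map: "eval s (map_form f a) = eval (s \<circ> f) a"
  by (induction a) auto

lemma set_negvars: "set_form (negvars a) = set_form a"
  by (induction a) auto

definition ws :: "'v set \<Rightarrow> ('v \<Rightarrow> real) \<Rightarrow> 'v form \<Rightarrow> real" where
  "ws V p a = (\<Sum>S\<in>Pow V. if eval (\<lambda>i. i \<in> S) a then (\<Prod>i\<in>V. if i \<in> S then p i else 1 - p i) else 0)"

lemma w_alt:
  assumes "finite V" "S \<subseteq> V"
  shows "(\<Prod>i\<in>S. p i) * (\<Prod>i\<in>V - S. 1 - p i) = (\<Prod>i\<in>V. if i \<in> S then p i else 1 - p i)"
proof -
  have "(\<Prod>i\<in>V. if i \<in> S then p i else 1 - p i) = prod p (V \<inter> {i. i \<in> S}) * prod (\<lambda>i. 1 - p i) (V \<inter> - {i. i \<in> S})"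
    using assms(1) by (rule prod.If_cases)
  moreover have "V \<inter> {i. i \<in> S} = S" "V \<inter> - {i. i \<in> S} = V - S" using assms by auto
  ultimately show ?thesis by simp
qed

lemma sl_ws:
  assumes "finite V"
  shows "semantic_loss c V p a = ereal c * neglog (ws V p a)"
proof -
  have e: "{S. S \<subseteq> V \<and> eval (\<lambda>i. i \<in> S) a} = {S \<in> Pow V. eval (\<lambda>i. i \<in> S) a}" by auto
  have "(\<Sum>S \<in> {S. S \<subseteq> V \<and> eval (\<lambda>i. i \<in> S) a}. (\<Prod>i\<in>S. p i) * (\<Prod>i\<in>V - S. 1 - p i))
      = (\<Sum>S \<in> Pow V. if eval (\<lambda>i. i \<in> S) a then (\<Prod>i\<in>S. p i) * (\<Prod>i\<in>V - S. 1 - p i) else 0)"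
    unfolding e by (rule sum.inter_filter) (simp add: assms)
  also have "\<dots> = ws V p a" unfolding ws_def
    by (rule sum.cong) (use assms w_alt in auto)
  finally show ?thesis unfolding semantic_loss_def by simp
qed

lemma ws_nonneg: "p \<in> pvecs V \<Longrightarrow> ws V p a \<ge> 0"
  unfolding ws_def pvecs_def
  by (intro sum_nonneg) (auto intro!: prod_nonneg simp: PiE_iff)

lemma ws_empty: "ws {} p a = (if eval (\<lambda>i. False) a then 1 else 0)"
  unfolding ws_def by simp

lemma ws_shannon:
  assumes "finite V" "v \<notin> V"
  shows "ws (insert v V) p a = p v * ws V p (subst v True a) + (1 - p v) * ws V p (subst v False a)"
proof -
  let ?f = "\<lambda>W S. if eval (\<lambda>i. i \<in> S) a then (\<Prod>i\<in>W. if i \<in> S then p i else 1 - p i) else 0"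
  have P: "Pow (insert v V) = Pow V \<union> insert v ` Pow V" by (rule Pow_insert)
  have dj: "Pow V \<inter> insert v ` Pow V = {}" using assms by auto
  have inj: "inj_on (insert v) (Pow V)"
  proof (rule inj_onI)
    fix x y assume "x \<in> Pow V" "y \<in> Pow V" "insert v x = insert v y"
    then have "x = insert v x - {v}" "y = insert v y - {v}" using assms by auto
    then show "x = y" using \<open>insert v x = insert v y\<close> by simp
  qed
  have s1: "sum (?f (insert v V)) (Pow (insert v V)) = sum (?f (insert v V)) (Pow V) + sum (?f (insert v V) \<circ> insert v) (Pow V)"
    unfolding P using assms dj inj by (simp add: sum.union_disjoint sum.reindex)
  have t0: "?f (insert v V) S = (1 - p v) * (if eval (\<lambda>i. i \<in> S) (subst v False a) then (\<Prod>i\<in>V. if i \<in> S then p i else 1 - p i) else 0)"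
    if "S \<in> Pow V" for S
  proof -
    have "v \<notin> S" using that assms by auto
    then have "(\<lambda>i. i \<in> S)(v := False) = (\<lambda>i. i \<in> S)" by (auto simp: fun_eq_iff)
    then show ?thesis using assms \<open>v \<notin> S\<close> by (simp add: eval_subst)
  qed
  have t1: "(?f (insert v V) \<circ> insert v) S = p v * (if eval (\<lambda>i. i \<in> S) (subst v True a) then (\<Prod>i\<in>V. if i \<in> S then p i else 1 - p i) else 0)"
    if "S \<in> Pow V" for S
  proof -
    have "(\<lambda>i. i \<in> S)(v := True) = (\<lambda>i. i \<in> insert v S)" by (auto simp: fun_eq_iff)
    moreover have "(\<Prod>i\<in>V. if i \<in> insert v S then p i else 1 - p i) = (\<Prod>i\<in>V. if i \<in> S then p i else 1 - p i)"
      by (rule prod.cong) (use assms in auto)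
    ultimately show ?thesis using assms by (simp add: eval_subst)
  qed
  have u0: "sum (?f (insert v V)) (Pow V) = (\<Sum>S\<in>Pow V. (1 - p v) * (if eval (\<lambda>i. i \<in> S) (subst v False a) then (\<Prod>i\<in>V. if i \<in> S then p i else 1 - p i) else 0))"
    by (rule sum.cong[OF refl t0])
  have u1: "sum (?f (insert v V) \<circ> insert v) (Pow V) = (\<Sum>S\<in>Pow V. p v * (if eval (\<lambda>i. i \<in> S) (subst v True a) then (\<Prod>i\<in>V. if i \<in> S then p i else 1 - p i) else 0))"
    by (rule sum.cong[OF refl t1])
  show ?thesis unfolding ws_def s1 u0 u1
    by (simp only: sum_distrib_left[symmetric] add.commute)
qed


lemma ws_TT: "finite V \<Longrightarrow> ws V p TT = 1"
proof (induction V rule: finite_induct)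
  case empty then show ?case by (simp add: ws_empty)
next
  case (insert v V) then show ?case by (simp add: ws_shannon)
qed

lemma ws_single_pos: "ws {v} p (Var v) = p v"
  using ws_shannon[of "{}" v p "Var v"] by (simp add: ws_empty)

lemma ws_single_neg: "ws {v} p (Neg (Var v)) = 1 - p v"
  using ws_shannon[of "{}" v p "Neg (Var v)"] by (simp add: ws_empty)

lemma ws_disj:
  assumes "\<not> satisfiable (Conj a b)"
  shows "ws V p (Disj a b) = ws V p a + ws V p b"
  unfolding ws_def sum.distrib[symmetric]
  by (rule sum.cong) (use assms in \<open>auto simp: satisfiable_def\<close>)

lemma ws_mono:
  assumes "p \<in> pvecs V" "entails a b"
  shows "ws V p a \<le> ws V p b"
  unfolding ws_def
proof (rule sum_mono)
  fix S assume "S \<in> Pow V"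
  have "(\<Prod>i\<in>V. if i \<in> S then p i else 1 - p i) \<ge> 0"
    using assms(1) by (intro prod_nonneg) (auto simp: pvecs_def PiE_iff)
  then show "(if eval (\<lambda>i. i \<in> S) a then \<Prod>i\<in>V. if i \<in> S then p i else 1 - p i else 0)
         \<le> (if eval (\<lambda>i. i \<in> S) b then \<Prod>i\<in>V. if i \<in> S then p i else 1 - p i else 0)"
    using assms(2) by (auto simp: entails_def)
qed

lemma eval_foldr: "eval s (foldr Conj (map (lit S) xs) TT) = (\<forall>v\<in>set xs. s v = (v \<in> S))"
  by (induction xs) (auto simp: lit_def)

lemma eval_state: "finite V \<Longrightarrow> eval s (state_form V S) = (\<forall>v\<in>V. s v = (v \<in> S))"
proof -
  assume "finite V"
  then have "\<exists>xs. set xs = V \<and> distinct xs" by (rule finite_distinct_list)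
  then have "set (SOME xs. set xs = V \<and> distinct xs) = V" by (rule someI2_ex) auto
  then show ?thesis unfolding state_form_def eval_foldr by simp
qed

lemma ws_state:
  assumes "finite V" "S \<subseteq> V"
  shows "ws V (state_vec V S) (state_form V S) = 1"
proof -
  have "ws V (state_vec V S) (state_form V S) = (\<Sum>T\<in>Pow V. if T = S then 1 else 0)"
    unfolding ws_def
  proof (rule sum.cong[OF refl])
    fix T assume T: "T \<in> Pow V"
    have e: "(\<forall>v\<in>V. (v \<in> T) = (v \<in> S)) = (T = S)" using T assms by auto
    have p: "(\<Prod>i\<in>V. if i \<in> S then state_vec V S i else 1 - state_vec V S i) = 1"
      by (rule prod.neutral) (auto simp: state_vec_def)
    show "(if eval (\<lambda>i. i \<in> T) (state_form V S) then \<Prod>i\<in>V. if i \<in> T then state_vec V S i else 1 - state_vec V S i else 0) = (if T = S then 1 else 0)"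
      using p by (simp add: eval_state[OF assms(1)] e)
  qed
  also have "\<dots> = 1" using assms by simp
  finally show ?thesis .
qed

lemma ws_negvars:
  assumes "finite V" "set_form a \<subseteq> V"
  shows "ws V (one_minus V p) (negvars a) = ws V p a"
  unfolding ws_def
proof (rule sum.reindex_bij_witness[where i = "\<lambda>T. V - T" and j = "\<lambda>T. V - T"])
  fix T assume T: "T \<in> Pow V"
  show "V - (V - T) = T" using T by auto
  show "V - T \<in> Pow V" by auto
  have e: "eval (\<lambda>i. i \<in> T) (negvars a) = eval (\<lambda>i. i \<in> V - T) a"
    unfolding eval_negvars by (rule eval_cong) (use assms in auto)
  have p: "(\<Prod>i\<in>V. if i \<in> V - T then p i else 1 - p i) = (\<Prod>i\<in>V. if i \<in> T then one_minus V p i else 1 - one_minus V p i)"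
    by (rule prod.cong) (auto simp: one_minus_def)
  show "(if eval (\<lambda>i. i \<in> V - T) a then \<Prod>i\<in>V. if i \<in> V - T then p i else 1 - p i else 0) =
        (if eval (\<lambda>i. i \<in> T) (negvars a) then \<Prod>i\<in>V. if i \<in> T then one_minus V p i else 1 - one_minus V p i else 0)"
    using e p by simp
next
  fix T assume T: "T \<in> Pow V"
  show "V - (V - T) = T" using T by auto
  show "V - T \<in> Pow V" by auto
qed

lemma ws_perm:
  assumes "finite V" "\<pi> permutes V"
  shows "ws V (p \<circ> inv \<pi>) (map_form \<pi> a) = ws V p a"
  unfolding ws_def
proof (rule sum.reindex_bij_witness[where i = "\<lambda>T. \<pi> ` T" and j = "\<lambda>T. inv \<pi> ` T"])
  note inv1 = permutes_inverses[OF assms(2)]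
  fix S assume S: "S \<in> Pow V"
  show "\<pi> ` inv \<pi> ` S = S" by (simp add: image_image inv1)
  show "inv \<pi> ` S \<in> Pow V" using S permutes_in_image[OF permutes_inv[OF assms(2)]] by auto
  have mem: "(x \<in> inv \<pi> ` S) = (\<pi> x \<in> S)" for x
    by (metis image_iff inv1)
  have e: "eval (\<lambda>i. i \<in> S) (map_form \<pi> a) = eval (\<lambda>i. i \<in> inv \<pi> ` S) a"
    unfolding eval_map by (simp add: mem o_def)
  have p: "(\<Prod>i\<in>V. if i \<in> inv \<pi> ` S then p i else 1 - p i) = (\<Prod>i\<in>V. if i \<in> S then (p \<circ> inv \<pi>) i else 1 - (p \<circ> inv \<pi>) i)"
    unfolding o_def by (subst prod.permute[OF permutes_inv[OF assms(2)]]) (simp add: mem inv1)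
  show "(if eval (\<lambda>i. i \<in> inv \<pi> ` S) a then \<Prod>i\<in>V. if i \<in> inv \<pi> ` S then p i else 1 - p i else 0) =
        (if eval (\<lambda>i. i \<in> S) (map_form \<pi> a) then \<Prod>i\<in>V. if i \<in> S then (p \<circ> inv \<pi>) i else 1 - (p \<circ> inv \<pi>) i else 0)"
    using e p by simp
next
  note inv1 = permutes_inverses[OF assms(2)]
  fix T assume T: "T \<in> Pow V"
  show "inv \<pi> ` \<pi> ` T = T" by (simp add: image_image inv1)
  show "\<pi> ` T \<in> Pow V" using T permutes_in_image[OF assms(2)] by auto
qed

lemma ws_conj:
  assumes "finite X" "finite Y" "X \<inter> Y = {}" "set_form a \<subseteq> X" "set_form b \<subseteq> Y"
  shows "ws (X \<union> Y) (concat_vec X p q) (Conj a b) = ws X p a * ws Y q b"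
proof -
  let ?r = "concat_vec X p q"
  define h where "h S = (if eval (\<lambda>i. i \<in> S) (Conj a b) then (\<Prod>i\<in>X \<union> Y. if i \<in> S then ?r i else 1 - ?r i) else 0)" for S
  define f where "f A = (if eval (\<lambda>i. i \<in> A) a then (\<Prod>i\<in>X. if i \<in> A then p i else 1 - p i) else 0)" for A
  define g where "g B = (if eval (\<lambda>i. i \<in> B) b then (\<Prod>i\<in>Y. if i \<in> B then q i else 1 - q i) else 0)" for B
  have img: "Pow (X \<union> Y) = (\<lambda>(A, B). A \<union> B) ` (Pow X \<times> Pow Y)"
  proof
    show "Pow (X \<union> Y) \<subseteq> (\<lambda>(A, B). A \<union> B) ` (Pow X \<times> Pow Y)"
    proof
      fix S assume "S \<in> Pow (X \<union> Y)"
      then have "S = (\<lambda>(A, B). A \<union> B) (S \<inter> X, S \<inter> Y)" by auto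
      then show "S \<in> (\<lambda>(A, B). A \<union> B) ` (Pow X \<times> Pow Y)" by blast
    qed
  qed auto
  have inj: "inj_on (\<lambda>(A, B). A \<union> B) (Pow X \<times> Pow Y)"
  proof (rule inj_onI, clarsimp)
    fix A B A' B' assume "A \<subseteq> X" "B \<subseteq> Y" "A' \<subseteq> X" "B' \<subseteq> Y" "A \<union> B = A' \<union> B'"
    then have "A = (A \<union> B) \<inter> X" "A' = (A' \<union> B') \<inter> X" "B = (A \<union> B) \<inter> Y" "B' = (A' \<union> B') \<inter> Y"
      using assms(3) by auto
    then show "A = A' \<and> B = B'" using \<open>A \<union> B = A' \<union> B'\<close> by metis
  qed
  have tm: "h (A \<union> B) = f A * g B" if "A \<subseteq> X" "B \<subseteq> Y" for A B
  proof -
    have ea: "eval (\<lambda>i. i \<in> A \<union> B) a = eval (\<lambda>i. i \<in> A) a"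
      by (rule eval_cong) (use that assms in auto)
    have eb: "eval (\<lambda>i. i \<in> A \<union> B) b = eval (\<lambda>i. i \<in> B) b"
      by (rule eval_cong) (use that assms in auto)
    have pr: "(\<Prod>i\<in>X \<union> Y. if i \<in> A \<union> B then ?r i else 1 - ?r i) =
      (\<Prod>i\<in>X. if i \<in> A \<union> B then ?r i else 1 - ?r i) * (\<Prod>i\<in>Y. if i \<in> A \<union> B then ?r i else 1 - ?r i)"
      using assms by (simp add: prod.union_disjoint)
    have px: "(\<Prod>i\<in>X. if i \<in> A \<union> B then ?r i else 1 - ?r i) = (\<Prod>i\<in>X. if i \<in> A then p i else 1 - p i)"
      by (rule prod.cong) (use that assms in \<open>auto simp: concat_vec_def\<close>)
    have py: "(\<Prod>i\<in>Y. if i \<in> A \<union> B then ?r i else 1 - ?r i) = (\<Prod>i\<in>Y. if i \<in> B then q i else 1 - q i)"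
      by (rule prod.cong) (use that assms in \<open>auto simp: concat_vec_def\<close>)
    show ?thesis unfolding h_def f_def g_def using ea eb pr px py by simp
  qed
  have "ws (X \<union> Y) ?r (Conj a b) = sum h (Pow (X \<union> Y))" unfolding ws_def h_def ..
  also have "\<dots> = sum (h \<circ> (\<lambda>(A, B). A \<union> B)) (Pow X \<times> Pow Y)"
    unfolding img using inj by (rule sum.reindex)
  also have "\<dots> = (\<Sum>(A, B)\<in>Pow X \<times> Pow Y. f A * g B)"
    by (rule sum.cong) (auto simp: tm)
  also have "\<dots> = sum f (Pow X) * sum g (Pow Y)"
    by (simp add: sum_product sum.cartesian_product)
  also have "\<dots> = ws X p a * ws Y q b" unfolding ws_def f_def g_def ..
  finally show ?thesis .
qed


lemma neglog_1[simp]: "neglog 1 = 0"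
  by (simp add: neglog_def zero_ereal_def)

lemma sl_mult:
  assumes "c > 0" "x \<ge> 0" "y \<ge> 0"
  shows "ereal c * neglog (x * y) = ereal c * neglog x + ereal c * neglog y"
proof (cases "x = 0 \<or> y = 0")
  case True
  then show ?thesis using assms by (auto simp: neglog_def)
next
  case False
  then have "x > 0" "y > 0" using assms by auto
  then show ?thesis by (simp add: neglog_def ln_mult algebra_simps)
qed

lemma neglog_anti:
  assumes "0 \<le> x" "x \<le> y"
  shows "neglog y \<le> neglog x"
proof (cases "x = 0")
  case True then show ?thesis by (simp add: neglog_def)
next
  case False
  then have "x > 0" "y > 0" using assms by auto
  then show ?thesis using assms by (simp add: neglog_def)
qed

lemma neglog_not_minf[simp]: "neglog x \<noteq> -\<infinity>"
  by (simp add: neglog_def)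

lemma sl_not_minf: "c > 0 \<Longrightarrow> ereal c * neglog x \<noteq> -\<infinity>"
  by (simp add: neglog_def)

lemma expo_sl:
  assumes "c > 0" "x \<ge> 0"
  shows "expo (exp (1 / c)) (ereal c * neglog x) = x"
proof (cases "x = 0")
  case True then show ?thesis using assms by (simp add: neglog_def expo_def)
next
  case False
  then have "x > 0" using assms by auto
  then have "expo (exp (1 / c)) (ereal c * neglog x) = exp (1/c) powr (c * ln x)"
    by (simp add: neglog_def expo_def)
  also have "\<dots> = exp (ln x)" using assms by (simp add: powr_def)
  also have "\<dots> = x" using \<open>x > 0\<close> by simp
  finally show ?thesis .
qed

lemma single_vec_pvecs: "x \<in> {0..1} \<Longrightarrow> single_vec v x \<in> pvecs {v}"
  by (simp add: single_vec_def pvecs_def)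

lemma part1:
  assumes c: "c > 0"
  shows "loss_axioms (semantic_loss c :: 'v lossfun)"
  unfolding loss_axioms_def
proof (intro conjI)
  show "is_loss (semantic_loss c)"
    unfolding is_loss_def valid_def using c by (auto simp: sl_ws sl_not_minf)
  show "A1 (semantic_loss c)"
    unfolding A1_def by (simp add: sl_ws ws_TT)
  show "A2 (semantic_loss c)"
    unfolding A2_def valid_def
    by (auto simp: sl_ws ws_conj sl_mult c ws_nonneg)
  show "A3 (semantic_loss c)"
    unfolding A3_def valid_def
    using c by (auto simp: sl_ws intro!: ereal_mult_left_mono neglog_anti ws_mono ws_nonneg)
  show "A4 (semantic_loss c)"
    unfolding A4_def by (simp add: sl_ws ws_state)
  show "A5 (semantic_loss c)"
    unfolding A5_def
    by (auto simp: sl_ws ws_single_pos ws_single_neg single_vec_def)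
  show "A6 (semantic_loss c)"
    unfolding A6_def valid_def by (simp add: sl_ws ws_negvars)
  show "A7 (semantic_loss c)"
    unfolding A7_def valid_def by (simp add: sl_ws ws_perm)
  show "A8 (semantic_loss c)"
    unfolding A8_def valid_def
    by (rule exI[of _ "exp (1/c)"]) (auto simp: sl_ws ws_disj expo_sl c ws_nonneg)
qed


lemma ws_cong: "(\<And>i. i \<in> V \<Longrightarrow> p i = q i) \<Longrightarrow> ws V p a = ws V q a"
  unfolding ws_def by (intro sum.cong refl arg_cong[where f = "\<lambda>x. if _ then x else 0"] prod.cong) auto

lemma expo_add:
  assumes "K > 0" "x \<noteq> -\<infinity>" "y \<noteq> -\<infinity>"
  shows "expo K (x + y) = expo K x * expo K y"
  using assms by (cases x; cases y) (auto simp: expo_def simp flip: powr_add)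

lemma expo_zero: "K > 0 \<Longrightarrow> expo K l = 0 \<Longrightarrow> l = \<infinity>"
  by (auto simp: expo_def split: if_splits)

lemma expo_0: "K > 0 \<Longrightarrow> expo K 0 = 1"
  by (simp add: expo_def)

context
  fixes L :: "'v lossfun" and K :: real
  assumes ax: "loss_axioms L" and Kpos: "K > 0"
    and A8K: "\<And>V p a b. valid V p a \<Longrightarrow> valid V p b \<Longrightarrow> \<not> satisfiable (Conj a b) \<Longrightarrow>
      expo K (L V p (Disj a b)) = expo K (L V p a) + expo K (L V p b)"
begin

lemma eqv:
  assumes "valid V p a" "valid V p b" "\<And>s. eval s a = eval s b"
  shows "L V p a = L V p b"
proof -
  have "A3 L" using ax by (simp add: loss_axioms_def)
  then have "L V p a \<ge> L V p b" "L V p b \<ge> L V p a" using assms unfolding A3_def entails_def by auto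
  then show ?thesis by simp
qed

lemma notminf: "valid V p a \<Longrightarrow> L V p a \<noteq> -\<infinity>"
proof -
  have "is_loss L" using ax by (simp add: loss_axioms_def)
  then show "valid V p a \<Longrightarrow> L V p a \<noteq> -\<infinity>" unfolding is_loss_def by blast
qed

lemma unsat0:
  assumes "valid V p a" "\<And>s. \<not> eval s a"
  shows "expo K (L V p a) = 0"
proof -
  have "expo K (L V p (Disj a a)) = expo K (L V p a) + expo K (L V p a)"
    using assms by (intro A8K) (auto simp: satisfiable_def)
  moreover have "L V p (Disj a a) = L V p a"
    using assms by (intro eqv) (auto simp: valid_def)
  ultimately show ?thesis by simp
qed

lemma lit:
  "\<exists>k. k > 0 \<and> k * ln K = 1 \<and> (\<forall>x\<in>{0..1}. L {v} (single_vec v x) (Var v) = ereal k * neglog x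
      \<and> L {v} (single_vec v x) (Neg (Var v)) = ereal k * neglog (1 - x))"
proof -
  have a5: "A5 L" and a6: "A6 L" and a1: "A1 L" and a3: "A3 L"
    using ax unfolding loss_axioms_def by simp_all
  obtain k k' where kk: "\<forall>x \<in> {0..1}. L {v} (single_vec v x) (Var v) = ereal k * neglog x \<and>
      L {v} (single_vec v x) (Neg (Var v)) = ereal k' * neglog (1 - x)"
    using a5 unfolding A5_def by blast
  have kx: "L {v} (single_vec v x) (Var v) = ereal k * neglog x"
    "L {v} (single_vec v x) (Neg (Var v)) = ereal k' * neglog (1 - x)" if "x \<in> {0..1}" for x
    using kk that by blast+
  have val: "valid {v} (single_vec v x) a" if "x \<in> {0..1}" "set_form a \<subseteq> {v}" for x a
    using that by (simp add: valid_def single_vec_pvecs)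
  have valT: "valid {v} (single_vec v x) TT" "valid {v} (single_vec v x) (Var v)"
    "valid {v} (single_vec v x) (Neg (Var v))" "valid {v} (single_vec v x) (Disj (Var v) (Neg (Var v)))"
    if "x \<in> {0..1}" for x
    using val[OF that] by simp_all
  have om: "one_minus {v} (single_vec v x) = single_vec v (1 - x)" for x
    by (auto simp: one_minus_def single_vec_def)
  have h: "(1::real)/2 \<in> {0..1}" by simp
  have "L {v} (single_vec v (1/2)) (Var v) = L {v} (one_minus {v} (single_vec v (1/2))) (negvars (Var v))"
    using a6 valT(2)[OF h] unfolding A6_def by blast
  then have "L {v} (single_vec v (1/2)) (Var v) = L {v} (single_vec v (1/2)) (Neg (Var v))"
    by (simp add: om)
  then have "ereal k * neglog (1/2) = ereal k' * neglog (1/2)"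
    using kx[OF h] by simp
  then have "ereal k * ereal (ln 2) = ereal k' * ereal (ln 2)"
    by (simp add: neglog_def ln_div)
  then have kk': "k = k'" by simp
  have L0: "L {v} (single_vec v x) TT = 0" if x: "x \<in> {0..1}" for x
  proof -
    have "finite {v} \<and> single_vec v x \<in> pvecs {v}" using single_vec_pvecs[OF x] by simp
    then show ?thesis using a1[unfolded A1_def, rule_format] by blast
  qed
  have split: "expo K (ereal k * neglog x) + expo K (ereal k * neglog (1 - x)) = 1" if x: "x \<in> {0..1}" for x
  proof -
    have "expo K (L {v} (single_vec v x) (Disj (Var v) (Neg (Var v)))) =
      expo K (L {v} (single_vec v x) (Var v)) + expo K (L {v} (single_vec v x) (Neg (Var v)))"
      by (rule A8K[OF valT(2)[OF x] valT(3)[OF x]]) (simp add: satisfiable_def)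
    moreover have "L {v} (single_vec v x) (Disj (Var v) (Neg (Var v))) = L {v} (single_vec v x) TT"
      by (rule eqv[OF valT(4)[OF x] valT(1)[OF x]]) simp
    ultimately show ?thesis using kx[OF x] kk' L0[OF x] expo_0[OF Kpos] by simp
  qed
  have "L {v} (single_vec v (1/2)) (Var v) \<ge> L {v} (single_vec v (1/2)) TT"
    using a3 valT(2)[OF h] valT(1)[OF h] unfolding A3_def entails_def by simp
  then have "ereal k * neglog (1/2) \<ge> 0" using kx[OF h] L0[OF h] by simp
  then have "ereal k * ereal (ln 2) \<ge> 0"
    by (simp add: neglog_def ln_div)
  then have "k * ln 2 \<ge> 0" by simp
  then have k0: "k \<ge> 0" by (simp add: zero_le_mult_iff)
  have "expo K (ereal k * neglog (1/2)) + expo K (ereal k * neglog (1 - 1/2)) = 1"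
    using split[OF h] .
  then have "expo K (ereal (k * ln 2)) + expo K (ereal (k * ln 2)) = 1"
    by (simp add: neglog_def ln_div)
  then have "K powr (- (k * ln 2)) = 1/2" by (simp add: expo_def)
  then have "ln (K powr (- (k * ln 2))) = ln (1/2)" by (rule arg_cong[where f = ln])
  then have "- (k * ln 2) * ln K = - ln 2" using Kpos by (simp add: ln_div)
  then have kl: "k * ln K = 1" by simp
  then have "k \<noteq> 0" by auto
  then have "k > 0" using k0 by simp
  moreover have "\<forall>x\<in>{0..1}. L {v} (single_vec v x) (Var v) = ereal k * neglog x
      \<and> L {v} (single_vec v x) (Neg (Var v)) = ereal k * neglog (1 - x)"
    using kx kk' by simp
  ultimately show ?thesis using kl by blast
qed

lemma lnK: "ln K > 0"
proof -
  obtain k where "k > 0" "k * ln K = 1" using lit[of undefined] by blast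
  then have "ln K = 1 / k" by (simp add: field_simps)
  then show ?thesis using \<open>k > 0\<close> by simp
qed

lemma cc_pos: "1 / ln K > 0" using lnK by simp

lemma K_eq: "K = exp (1 / (1 / ln K))" using Kpos by simp

lemma lit_expo:
  assumes "x \<in> {0..1}"
  shows "expo K (L {v} (single_vec v x) (Var v)) = x"
proof -
  obtain k where k: "k > 0" "k * ln K = 1" "\<forall>x\<in>{0..1}. L {v} (single_vec v x) (Var v) = ereal k * neglog x
      \<and> L {v} (single_vec v x) (Neg (Var v)) = ereal k * neglog (1 - x)"
    using lit[of v] by blast
  have kc: "k = 1 / ln K" using k(2) lnK by (simp add: field_simps)
  have "L {v} (single_vec v x) (Var v) = ereal (1 / ln K) * neglog x" using k(3) assms kc by blast
  moreover have "expo (exp (1 / (1 / ln K))) (ereal (1 / ln K) * neglog x) = x"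
    by (rule expo_sl[OF cc_pos]) (use assms in auto)
  ultimately show ?thesis using K_eq by simp
qed

lemma lit_expo_neg:
  assumes "x \<in> {0..1}"
  shows "expo K (L {v} (single_vec v x) (Neg (Var v))) = 1 - x"
proof -
  obtain k where k: "k > 0" "k * ln K = 1" "\<forall>x\<in>{0..1}. L {v} (single_vec v x) (Var v) = ereal k * neglog x
      \<and> L {v} (single_vec v x) (Neg (Var v)) = ereal k * neglog (1 - x)"
    using lit[of v] by blast
  have kc: "k = 1 / ln K" using k(2) lnK by (simp add: field_simps)
  have "L {v} (single_vec v x) (Neg (Var v)) = ereal (1 / ln K) * neglog (1 - x)" using k(3) assms kc by blast
  moreover have "expo (exp (1 / (1 / ln K))) (ereal (1 / ln K) * neglog (1 - x)) = 1 - x"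
    by (rule expo_sl[OF cc_pos]) (use assms in auto)
  ultimately show ?thesis using K_eq by simp
qed

lemma main:
  assumes "finite V"
  shows "p \<in> pvecs V \<Longrightarrow> set_form a \<subseteq> V \<Longrightarrow> expo K (L V p a) = ws V p a"
  using assms
proof (induction V arbitrary: p a rule: finite_induct)
  case empty
  have ev: "eval s a = eval (\<lambda>i. False) a" for s by (rule eval_cong) (use empty in auto)
  have va: "valid {} p a" using empty by (simp add: valid_def)
  show ?case
  proof (cases "eval (\<lambda>i. False) a")
    case True
    have ta: "eval s a" for s using ev[of s] True by blast
    have "L {} p a = L {} p TT" by (rule eqv) (use va ta in \<open>auto simp: valid_def\<close>)
    moreover have "L {} p TT = 0"
    proof -
      have "A1 L" using ax by (simp add: loss_axioms_def)
      moreover have "finite {} \<and> p \<in> pvecs {}" using empty by simp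
      ultimately show ?thesis unfolding A1_def by blast
    qed
    ultimately show ?thesis using True by (simp add: ws_empty expo_0[OF Kpos])
  next
    case False
    have fa: "\<not> eval s a" for s using ev[of s] False by blast
    show ?thesis using unsat0[OF va fa] False by (simp add: ws_empty)
  qed
next
  case (insert v V)
  define b1 where "b1 = subst v True a"
  define b0 where "b0 = subst v False a"
  define q where "q = restrict p V"
  define p1 where "p1 = single_vec v (p v)"
  have pv: "p v \<in> {0..1}" using insert.prems unfolding pvecs_def by auto
  have q: "q \<in> pvecs V" using insert.prems unfolding q_def pvecs_def by auto
  have p1: "p1 \<in> pvecs {v}" unfolding p1_def using pv by (rule single_vec_pvecs)
  have sb1: "set_form b1 \<subseteq> V" using set_subst[of v True a] insert.prems unfolding b1_def by auto
  have sb0: "set_form b0 \<subseteq> V" using set_subst[of v False a] insert.prems unfolding b0_def by auto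
  have cat: "concat_vec {v} p1 q = p"
  proof
    fix i show "concat_vec {v} p1 q i = p i"
      using insert.prems(1) unfolding concat_vec_def p1_def q_def single_vec_def pvecs_def
      by (auto simp: PiE_def extensional_def)
  qed
  have fin: "finite (insert v V)" using insert by simp
  have ev: "eval s a = eval s (Disj (Conj (Var v) b1) (Conj (Neg (Var v)) b0))" for s
  proof (cases "s v")
    case True
    have "eval (s(v:=True)) a = eval s a" by (rule eval_cong) (use True in auto)
    then show ?thesis using True by (simp add: b1_def eval_subst)
  next
    case False
    have "eval (s(v:=False)) a = eval s a" by (rule eval_cong) (use False in auto)
    then show ?thesis using False by (simp add: b0_def eval_subst)
  qed
  have v1: "valid (insert v V) p (Conj (Var v) b1)" using fin insert.prems sb1 by (auto simp: valid_def)
  have v0: "valid (insert v V) p (Conj (Neg (Var v)) b0)" using fin insert.prems sb0 by (auto simp: valid_def)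
  have "L (insert v V) p a = L (insert v V) p (Disj (Conj (Var v) b1) (Conj (Neg (Var v)) b0))"
    by (rule eqv) (use fin insert.prems sb1 sb0 ev in \<open>auto simp: valid_def\<close>)
  then have s: "expo K (L (insert v V) p a) = expo K (L (insert v V) p (Conj (Var v) b1)) + expo K (L (insert v V) p (Conj (Neg (Var v)) b0))"
    using A8K[OF v1 v0] by (simp add: satisfiable_def)
  have A2: "A2 L" using ax by (simp add: loss_axioms_def)
  have vq1: "valid V q b1" using q sb1 insert(1) by (simp add: valid_def)
  have vq0: "valid V q b0" using q sb0 insert(1) by (simp add: valid_def)
  have vl1: "valid {v} p1 (Var v)" using p1 by (simp add: valid_def)
  have vl0: "valid {v} p1 (Neg (Var v))" using p1 by (simp add: valid_def)
  have dj: "{v} \<inter> V = {}" using insert(2) by simp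
  have c1: "L (insert v V) p (Conj (Var v) b1) = L {v} p1 (Var v) + L V q b1"
    using A2[unfolded A2_def, rule_format, OF conjI[OF vl1 conjI[OF vq1 dj]]] cat by simp
  have c0: "L (insert v V) p (Conj (Neg (Var v)) b0) = L {v} p1 (Neg (Var v)) + L V q b0"
    using A2[unfolded A2_def, rule_format, OF conjI[OF vl0 conjI[OF vq0 dj]]] cat by simp
  have e1: "expo K (L (insert v V) p (Conj (Var v) b1)) = p v * ws V p b1"
  proof -
    have "expo K (L (insert v V) p (Conj (Var v) b1)) = expo K (L {v} p1 (Var v)) * expo K (L V q b1)"
      unfolding c1 by (rule expo_add[OF Kpos notminf[OF vl1] notminf[OF vq1]])
    also have "expo K (L {v} p1 (Var v)) = p v" unfolding p1_def by (rule lit_expo[OF pv])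
    also have "expo K (L V q b1) = ws V q b1" by (rule insert.IH[OF q sb1])
    also have "ws V q b1 = ws V p b1" unfolding q_def by (rule ws_cong) simp
    finally show ?thesis .
  qed
  have e0: "expo K (L (insert v V) p (Conj (Neg (Var v)) b0)) = (1 - p v) * ws V p b0"
  proof -
    have "expo K (L (insert v V) p (Conj (Neg (Var v)) b0)) = expo K (L {v} p1 (Neg (Var v))) * expo K (L V q b0)"
      unfolding c0 by (rule expo_add[OF Kpos notminf[OF vl0] notminf[OF vq0]])
    also have "expo K (L {v} p1 (Neg (Var v))) = 1 - p v" unfolding p1_def by (rule lit_expo_neg[OF pv])
    also have "expo K (L V q b0) = ws V q b0" by (rule insert.IH[OF q sb0])
    also have "ws V q b0 = ws V p b0" unfolding q_def by (rule ws_cong) simp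
    finally show ?thesis .
  qed
  show ?case using s e1 e0 ws_shannon[OF insert(1) insert(2)] by (simp add: b1_def b0_def)
qed

lemma final:
  assumes va: "valid V p a"
  shows "L V p a = semantic_loss (1 / ln K) V p a"
proof -
  have fin: "finite V" and pp: "p \<in> pvecs V" using va by (auto simp: valid_def)
  define W where "W = ws V p a"
  have W0: "W \<ge> 0" unfolding W_def using pp by (rule ws_nonneg)
  have e: "expo K (L V p a) = W" unfolding W_def using main[OF fin] va by (auto simp: valid_def)
  have r: "semantic_loss (1 / ln K) V p a = ereal (1 / ln K) * neglog W" unfolding W_def by (rule sl_ws[OF fin])
  show ?thesis
  proof (cases "W = 0")
    case True
    then have "L V p a = \<infinity>" using e expo_zero[OF Kpos] by simp
    then show ?thesis using r True cc_pos by (simp add: neglog_def)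
  next
    case False
    then have Wp: "W > 0" using W0 by simp
    have "L V p a \<noteq> \<infinity>" using e Wp by (auto simp: expo_def)
    moreover have "L V p a \<noteq> -\<infinity>" by (rule notminf[OF va])
    ultimately obtain x where x: "L V p a = ereal x" by (cases "L V p a") auto
    then have "K powr (- x) = W" using e by (simp add: expo_def)
    then have "ln (K powr (- x)) = ln W" by simp
    then have "- x * ln K = ln W" using Kpos by simp
    then have "x = (1 / ln K) * (- ln W)" using lnK by (simp add: field_simps)
    then show ?thesis using r x Wp by (simp add: neglog_def)
  qed
qed

end

lemma part2:
  assumes ax: "loss_axioms (L :: 'v lossfun)"
  shows "\<exists>c::real. c > 0 \<and> (\<forall>V p a. valid V p a \<longrightarrow> L V p a = semantic_loss c V p a)"
proof -
  obtain K where K: "K > 0" and A8K: "\<And>V p a b. valid V p a \<Longrightarrow> valid V p b \<Longrightarrow> \<not> satisfiable (Conj a b) \<Longrightarrow>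
      expo K (L V p (Disj a b)) = expo K (L V p a) + expo K (L V p b)"
  proof -
    have "A8 L" using ax by (simp add: loss_axioms_def)
    then show ?thesis using that unfolding A8_def by blast
  qed
  show ?thesis
    using cc_pos[OF ax K A8K] final[OF ax K A8K] by blast
qed

theorem theorem1:
  shows "(\<forall>c::real. c > 0 \<longrightarrow> loss_axioms (semantic_loss c :: 'v lossfun)) \<and>
         (\<forall>L :: 'v lossfun. loss_axioms L \<longrightarrow>
            (\<exists>c::real. c > 0 \<and> (\<forall>V p a. valid V p a \<longrightarrow> L V p a = semantic_loss c V p a)))"
  using part1 part2 by blast

end
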